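(* Let $(X,d)$ be a compact metric space and $f:X\to X$ a cw-expansive homeomorphism. Then for every $\varepsilon>0$ there exists $\delta>0$ such that for every $x\in X$ whose $\omega$-limit set $\omega(x)$ contains a point at which $X$ is locally connected, either $x$ is a periodic source or $\operatorname{diam} CW^s_\varepsilon(x)\ge\delta$.
   Context: A homeomorphism $f:X\to X$ of a compact metric space is continuum-wise expansive (cw-expansive) if there is a constant $\alpha>0$ such that $\sup_{n\in\mathbb Z}\operatorname{diam} f^n(C)>\alpha$ for every continuum $C\subset X$ containing more than one point. For $\varepsilon>0$ and $x\in X$: $W^s_\varepsilon(x)=\{y\in X:\ d(f^n(x),f^n(y))\le\varepsilon \text{ for all } n\ge 0\}$, $W^u_\varepsilon(x)=\{y\in X:\ d(f^{-n}(x),f^{-n}(y))\le\varepsilon \text{ for all } n\ge 0\}$, $CW^s_\varepsilon(x)$ is the connected component of $W^s_\varepsilon(x)$ containing $x$, and $W^u(x)=\{y:\ d(f^{-n}(x),f^{-n}(y))\to0\}$. A point $x$ is a source if $W^u_\varepsilon(x)$ is a neighborhood of $x$ for every $\varepsilon>0$ and there exists $\varepsilon>0$ with $W^u_\varepsilon(x)\subset W^u(x)$. $\omega(x)$ is the set of limits of sequences $f^{n_k}(x)$ with $n_k\to\infty$. $X$ is locally connected at $z$ if every neighborhood of $z$ contains a connected neighborhood of $z$. *)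

theory Defs
  imports "HOL-Analysis.Analysis"
begin

text \<open>Dynamics of a homeomorphism f of a compact metric space X, with inverse g
  (i.e. homeomorphism X X f g). Integer iterates:\<close>

definition iterz :: "('a \<Rightarrow> 'a) \<Rightarrow> ('a \<Rightarrow> 'a) \<Rightarrow> int \<Rightarrow> 'a \<Rightarrow> 'a" where
  "iterz f g n = (if n \<ge> 0 then f ^^ nat n else g ^^ nat (- n))"

definition cw_expansive :: "'a::metric_space set \<Rightarrow> ('a \<Rightarrow> 'a) \<Rightarrow> ('a \<Rightarrow> 'a) \<Rightarrow> bool" where
  "cw_expansive X f g \<longleftrightarrow> (\<exists>\<alpha>>0. \<forall>C. C \<subseteq> X \<and> compact C \<and> connected C \<and> (\<exists>x\<in>C. \<exists>y\<in>C. x \<noteq> y)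
      \<longrightarrow> (SUP n. ereal (diameter (iterz f g n ` C))) > ereal \<alpha>)"

definition Ws :: "'a::metric_space set \<Rightarrow> ('a \<Rightarrow> 'a) \<Rightarrow> real \<Rightarrow> 'a \<Rightarrow> 'a set" where
  "Ws X f \<epsilon> x = {y \<in> X. \<forall>n::nat. dist ((f ^^ n) x) ((f ^^ n) y) \<le> \<epsilon>}"

definition Wu_eps :: "'a::metric_space set \<Rightarrow> ('a \<Rightarrow> 'a) \<Rightarrow> real \<Rightarrow> 'a \<Rightarrow> 'a set" where
  "Wu_eps X g \<epsilon> x = {y \<in> X. \<forall>n::nat. dist ((g ^^ n) x) ((g ^^ n) y) \<le> \<epsilon>}"

definition CWs :: "'a::metric_space set \<Rightarrow> ('a \<Rightarrow> 'a) \<Rightarrow> real \<Rightarrow> 'a \<Rightarrow> 'a set" where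
  "CWs X f \<epsilon> x = connected_component_set (Ws X f \<epsilon> x) x"

definition Wu :: "'a::metric_space set \<Rightarrow> ('a \<Rightarrow> 'a) \<Rightarrow> 'a \<Rightarrow> 'a set" where
  "Wu X g x = {y \<in> X. (\<lambda>n. dist ((g ^^ n) x) ((g ^^ n) y)) \<longlonglongrightarrow> 0}"

definition nbhd_in :: "'a::metric_space set \<Rightarrow> 'a set \<Rightarrow> 'a \<Rightarrow> bool" where
  "nbhd_in X N x \<longleftrightarrow> (\<exists>U. openin (top_of_set X) U \<and> x \<in> U \<and> U \<subseteq> N)"

definition is_source :: "'a::metric_space set \<Rightarrow> ('a \<Rightarrow> 'a) \<Rightarrow> 'a \<Rightarrow> bool" where
  "is_source X g x \<longleftrightarrow> (\<forall>\<epsilon>>0. nbhd_in X (Wu_eps X g \<epsilon> x) x) \<and> (\<exists>\<epsilon>>0. Wu_eps X g \<epsilon> x \<subseteq> Wu X g x)"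

definition is_periodic :: "('a \<Rightarrow> 'a) \<Rightarrow> 'a \<Rightarrow> bool" where
  "is_periodic f x \<longleftrightarrow> (\<exists>n>0. (f ^^ n) x = x)"

definition omega_limit :: "('a::metric_space \<Rightarrow> 'a) \<Rightarrow> 'a \<Rightarrow> 'a set" where
  "omega_limit f x = {y. \<exists>r. strict_mono r \<and> (\<lambda>k. (f ^^ r k) x) \<longlonglongrightarrow> y}"

definition locally_connected_at :: "'a::metric_space set \<Rightarrow> 'a \<Rightarrow> bool" where
  "locally_connected_at X z \<longleftrightarrow>
     (\<forall>V. nbhd_in X V z \<longrightarrow> (\<exists>N. N \<subseteq> V \<and> N \<subseteq> X \<and> connected N \<and> nbhd_in X N z))"

end

theory Submission
  imports Defs
begin

lemma hom_props:
  assumes "homeomorphism X X f g"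
  shows "\<And>x. x \<in> X \<Longrightarrow> (f ^^ n) x \<in> X" "\<And>x. x \<in> X \<Longrightarrow> (g ^^ n) x \<in> X"
    "\<And>x. x \<in> X \<Longrightarrow> (g ^^ n) ((f ^^ n) x) = x" "\<And>x. x \<in> X \<Longrightarrow> (f ^^ n) ((g ^^ n) x) = x"
    "continuous_on X (f ^^ n)" "continuous_on X (g ^^ n)"
proof -
  have h: "\<And>x. x\<in>X \<Longrightarrow> g (f x) = x" "f ` X = X" "\<And>y. y\<in>X \<Longrightarrow> f (g y) = y" "g ` X = X"
     "continuous_on X f" "continuous_on X g" using assms unfolding homeomorphism_def by auto
  have fX: "\<And>x. x \<in> X \<Longrightarrow> (f ^^ n) x \<in> X" for n
    by (induction n) (use h in auto)
  have gX: "\<And>x. x \<in> X \<Longrightarrow> (g ^^ n) x \<in> X" for n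
    by (induction n) (use h in auto)
  show "\<And>x. x \<in> X \<Longrightarrow> (f ^^ n) x \<in> X" "\<And>x. x \<in> X \<Longrightarrow> (g ^^ n) x \<in> X" using fX gX by auto
  show "\<And>x. x \<in> X \<Longrightarrow> (g ^^ n) ((f ^^ n) x) = x"
  proof (induction n)
    case (Suc n)
    have "(g ^^ Suc n) ((f ^^ Suc n) x) = (g ^^ n) (g (f ((f ^^ n) x)))"
      unfolding funpow_Suc_right[of n g] by simp
    also have "\<dots> = x" using Suc fX h by auto
    finally show ?case .
  qed simp
  show "\<And>x. x \<in> X \<Longrightarrow> (f ^^ n) ((g ^^ n) x) = x"
  proof (induction n)
    case (Suc n)
    have "(f ^^ Suc n) ((g ^^ Suc n) x) = (f ^^ n) (f (g ((g ^^ n) x)))"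
      unfolding funpow_Suc_right[of n f] by simp
    also have "\<dots> = x" using Suc gX h by auto
    finally show ?case .
  qed simp
  show "continuous_on X (f ^^ n)"
  proof (induction n)
    case 0 then show ?case by (simp add: continuous_on_id')
  next
    case (Suc n)
    have "continuous_on X (\<lambda>x. f ((f ^^ n) x))"
      by (rule continuous_on_compose2[OF h(5) Suc]) (use fX in auto)
    then show ?case by (simp add: o_def)
  qed
  show "continuous_on X (g ^^ n)"
  proof (induction n)
    case 0 then show ?case by (simp add: continuous_on_id')
  next
    case (Suc n)
    have "continuous_on X (\<lambda>x. g ((g ^^ n) x))"
      by (rule continuous_on_compose2[OF h(6) Suc]) (use gX in auto)
    then show ?case by (simp add: o_def)
  qed
qed

lemma fg_shift:
  assumes "homeomorphism X X f g" "u \<in> X" "i \<le> n"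
  shows "(f ^^ i) ((g ^^ n) u) = (g ^^ (n - i)) u"
proof -
  have "(g ^^ n) u = (g ^^ i) ((g ^^ (n - i)) u)"
    using assms(3) by (metis funpow_add le_add_diff_inverse comp_apply)
  then show ?thesis using hom_props[OF assms(1)] assms(2) by simp
qed

lemma gf_shift:
  assumes "homeomorphism X X f g" "u \<in> X" "i \<le> n"
  shows "(g ^^ i) ((f ^^ n) u) = (f ^^ (n - i)) u"
proof -
  have "(f ^^ n) u = (f ^^ i) ((f ^^ (n - i)) u)"
    using assms(3) by (metis funpow_add le_add_diff_inverse comp_apply)
  then show ?thesis using hom_props[OF assms(1)] assms(2) by simp
qed

lemma iterz_g:
  assumes "homeomorphism X X f g" "u \<in> X" "j \<le> int s"
  shows "iterz f g j ((g ^^ s) u) = (g ^^ (nat (int s - j))) u"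
proof (cases "j \<ge> 0")
  case True
  then have "iterz f g j ((g ^^ s) u) = (f ^^ nat j) ((g ^^ s) u)" by (simp add: iterz_def)
  also have "\<dots> = (g ^^ (s - nat j)) u" using fg_shift[OF assms(1,2), of "nat j" s] assms(3) by simp
  moreover have "s - nat j = nat (int s - j)" using True assms(3) by (cases j) auto
  ultimately show ?thesis by simp
next
  case False
  then have "iterz f g j ((g ^^ s) u) = (g ^^ nat (-j)) ((g ^^ s) u)" by (simp add: iterz_def)
  also have "\<dots> = (g ^^ (nat (-j) + s)) u" by (simp add: funpow_add)
  moreover have "nat (-j) + s = nat (int s - j)" using False by simp
  ultimately show ?thesis by simp
qed

lemma iterz_f:
  assumes "homeomorphism X X f g" "u \<in> X" "- j \<le> int i"
  shows "iterz f g j ((f ^^ i) u) = (f ^^ (nat (int i + j))) u"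
proof (cases "j \<ge> 0")
  case True
  then have "iterz f g j ((f ^^ i) u) = (f ^^ nat j) ((f ^^ i) u)" by (simp add: iterz_def)
  also have "\<dots> = (f ^^ (nat j + i)) u" by (simp add: funpow_add)
  moreover have "nat j + i = nat (int i + j)" using True by simp
  ultimately show ?thesis by simp
next
  case False
  then have "iterz f g j ((f ^^ i) u) = (g ^^ nat (-j)) ((f ^^ i) u)" by (simp add: iterz_def)
  also have "\<dots> = (f ^^ (i - nat (-j))) u" using gf_shift[OF assms(1,2), of "nat (-j)" i] assms(3) by simp
  moreover have "i - nat (-j) = nat (int i + j)" using False assms(3) by simp
  ultimately show ?thesis by simp
qed

lemma iterz_props:
  assumes "homeomorphism X X f g"
  shows "\<And>u. u \<in> X \<Longrightarrow> iterz f g j u \<in> X" "continuous_on X (iterz f g j)"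
  using hom_props[OF assms] by (auto simp: iterz_def)

lemma unif_fin:
  fixes F :: "nat \<Rightarrow> 'a::metric_space \<Rightarrow> 'b::metric_space"
  assumes "compact X" "\<And>n. continuous_on X (F n)" "e > 0"
  shows "\<exists>d>0. \<forall>i\<le>N. \<forall>u\<in>X. \<forall>v\<in>X. dist u v < d \<longrightarrow> dist (F i u) (F i v) < e"
proof (induction N)
  case 0
  have "uniformly_continuous_on X (F 0)" using assms compact_uniformly_continuous by blast
  then obtain d where "d>0" "\<forall>u\<in>X. \<forall>v\<in>X. dist v u < d \<longrightarrow> dist (F 0 v) (F 0 u) < e"
    using assms(3) unfolding uniformly_continuous_on_def by metis
  then show ?case by (metis dist_commute le_zero_eq)
next
  case (Suc N)
  then obtain d1 where d1: "d1 > 0" "\<forall>i\<le>N. \<forall>u\<in>X. \<forall>v\<in>X. dist u v < d1 \<longrightarrow> dist (F i u) (F i v) < e" by blast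
  have "uniformly_continuous_on X (F (Suc N))" using assms compact_uniformly_continuous by blast
  then obtain d where d: "d>0" "\<forall>u\<in>X. \<forall>v\<in>X. dist v u < d \<longrightarrow> dist (F (Suc N) v) (F (Suc N) u) < e"
    using assms(3) unfolding uniformly_continuous_on_def by metis
  show ?case
    apply (rule exI[of _ "min d d1"])
    using d d1 by (auto simp: le_Suc_eq dist_commute)
qed

definition lsup :: "(nat \<Rightarrow> 'a::metric_space set) \<Rightarrow> 'a set" where
  "lsup D = {y. \<forall>\<rho>>0. \<forall>M. \<exists>n\<ge>M. \<exists>c\<in>D n. dist c y < \<rho>}"

lemma lsup_I:
  assumes "\<And>j. t j \<ge> j" "\<And>j. c j \<in> D (t j)" "c \<longlonglongrightarrow> y"
  shows "y \<in> lsup D"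
  unfolding lsup_def
proof (intro CollectI allI impI)
  fix \<rho> :: real and M assume "\<rho> > 0"
  then obtain no where no: "\<forall>n\<ge>no. dist (c n) y < \<rho>" using assms(3) lim_sequentially by metis
  let ?j = "max no M"
  have "t ?j \<ge> M" using assms(1)[of ?j] by linarith
  moreover have "dist (c ?j) y < \<rho>" using no by simp
  ultimately show "\<exists>n\<ge>M. \<exists>c\<in>D n. dist c y < \<rho>" using assms(2) by blast
qed

lemma lsup_E:
  assumes "y \<in> lsup D"
  obtains t c where "\<And>j. t j \<ge> j" "\<And>j. c j \<in> D (t j)" "c \<longlonglongrightarrow> y"
proof -
  have "\<forall>j. \<exists>n. n \<ge> j \<and> (\<exists>c. c \<in> D n \<and> dist c y < 1 / Suc j)"
  proof
    fix j
    have pos: "(1::real) / Suc j > 0" by simp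
    from assms have "\<exists>n\<ge>j. \<exists>c\<in>D n. dist c y < 1 / Suc j" unfolding lsup_def using pos by blast
    then show "\<exists>n. n \<ge> j \<and> (\<exists>c. c \<in> D n \<and> dist c y < 1 / Suc j)" by blast
  qed
  then obtain t c where tc: "\<And>j. t j \<ge> j" "\<And>j. c j \<in> D (t j)" "\<And>j. dist (c j) y < 1 / Suc j"
    by metis
  have "c \<longlonglongrightarrow> y"
    unfolding lim_sequentially
  proof (intro allI impI)
    fix r :: real assume "r > 0"
    then obtain N where N: "1 / Suc N < r" using reals_Archimedean by (metis inverse_eq_divide)
    have "dist (c n) y < r" if "n \<ge> N" for n
    proof -
      have "1 / real (Suc n) \<le> 1 / Suc N" using that by (simp add: frac_le)
      then show ?thesis using tc(3)[of n] N by linarith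
    qed
    then show "\<exists>no. \<forall>n\<ge>no. dist (c n) y < r" by blast
  qed
  then show ?thesis using that tc by blast
qed

lemma lsup_closed: "closed (lsup D)"
proof -
  have "closure (lsup D) \<subseteq> lsup D"
  proof
    fix x assume x: "x \<in> closure (lsup D)"
    show "x \<in> lsup D"
      unfolding lsup_def
    proof (intro CollectI allI impI)
      fix \<rho> :: real and M assume "\<rho> > 0"
      then have h: "\<rho>/2 > 0" by simp
      then obtain y where y: "y \<in> lsup D" "dist y x < \<rho>/2" using x closure_approachable
        by blast
      then obtain n c where nc: "n \<ge> M" "c \<in> D n" "dist c y < \<rho>/2" using h unfolding lsup_def
        by blast
      have "dist c x < \<rho>" using nc y dist_triangle[of c x y] by linarith
      then show "\<exists>n\<ge>M. \<exists>c\<in>D n. dist c x < \<rho>" using nc by blast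
    qed
  qed
  then show ?thesis using closure_subset_eq by blast
qed

lemma lsup_subset:
  assumes "closed X" "\<And>n. D n \<subseteq> X"
  shows "lsup D \<subseteq> X"
proof
  fix y assume y: "y \<in> lsup D"
  obtain t c where tc: "\<And>j. t j \<ge> j" "\<And>j. c j \<in> D (t j)" "c \<longlonglongrightarrow> y" using lsup_E[OF y] by blast
  have "\<forall>j. c j \<in> X" using tc(2) assms(2) by blast
  then show "y \<in> X" using closed_sequentially[OF assms(1) _ tc(3)] by blast
qed

lemma lsup_connected_aux:
  fixes D :: "nat \<Rightarrow> 'a::metric_space set"
  assumes X: "compact X" "\<And>n. D n \<subseteq> X" and conn: "\<And>n. connected (D n)"
    and a: "\<And>n. a n \<in> D n" "a \<longlonglongrightarrow> a0"
    and AB: "closed A" "closed B" "A \<inter> B = {}" "A \<union> B = lsup D" "a0 \<in> A" "B \<noteq> {}"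
  shows False
proof -
  define \<phi> where "\<phi> y = infdist y A - infdist y B" for y
  have cont: "continuous_on UNIV \<phi>" unfolding \<phi>_def by (intro continuous_intros)
  have Aneg: "\<phi> y < 0" if "y \<in> A" for y
    using that AB infdist_pos_not_in_closed[of B y] unfolding \<phi>_def by auto
  have Bpos: "\<phi> y > 0" if "y \<in> B" for y
    using that AB infdist_pos_not_in_closed[of A y] unfolding \<phi>_def by auto
  obtain b where b: "b \<in> B" using AB by auto
  have "isCont \<phi> b" using cont by (simp add: continuous_on_eq_continuous_at)
  then obtain \<rho> where \<rho>0: "\<rho> > 0" "\<forall>y. dist y b < \<rho> \<longrightarrow> dist (\<phi> y) (\<phi> b) < \<phi> b"
    using Bpos[OF b] unfolding continuous_at_eps_delta by blast
  have \<rho>: "\<rho> > 0" "\<And>y. dist y b < \<rho> \<Longrightarrow> \<phi> y > 0"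
    using \<rho>0 by (auto simp: dist_real_def abs_less_iff)
  have isc: "\<And>y. isCont \<phi> y" using cont by (simp add: continuous_on_eq_continuous_at)
  have "(\<lambda>n. \<phi> (a n)) \<longlonglongrightarrow> \<phi> a0" using isCont_tendsto_compose[OF isc a(2)] .
  then have "eventually (\<lambda>n. \<phi> (a n) < 0) sequentially" using order_tendstoD(2) Aneg[OF AB(5)] by blast
  then obtain M0 where M0: "\<And>n. n \<ge> M0 \<Longrightarrow> \<phi> (a n) < 0"
    unfolding eventually_sequentially by blast
  have "\<exists>n\<ge>M. \<exists>m\<in>D n. \<phi> m = 0" for M
  proof -
    have "b \<in> lsup D" using AB b by auto
    then obtain n c where n: "n \<ge> max M M0" "c \<in> D n" "dist c b < \<rho>" using \<rho> unfolding lsup_def by blast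
    have "connected (\<phi> ` D n)" using conn cont
      by (meson connected_continuous_image continuous_on_subset subset_UNIV)
    moreover have "\<phi> (a n) \<in> \<phi> ` D n" "\<phi> c \<in> \<phi> ` D n" using a n by auto
    ultimately have "{\<phi> (a n)..\<phi> c} \<subseteq> \<phi> ` D n" by (rule connected_contains_Icc)
    moreover have "\<phi> (a n) < 0" "\<phi> c > 0" using M0 n \<rho> by auto
    ultimately have "0 \<in> \<phi> ` D n" by auto
    then obtain mm where "mm \<in> D n" "\<phi> mm = 0" by auto
    moreover have "n \<ge> M" using n(1) by simp
    ultimately show ?thesis by blast
  qed
  then have "\<forall>j. \<exists>n. n \<ge> j \<and> (\<exists>m. m \<in> D n \<and> \<phi> m = 0)" by blast
  from choice[OF this] obtain t where t: "\<forall>j. t j \<ge> j \<and> (\<exists>m. m \<in> D (t j) \<and> \<phi> m = 0)" by blast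
  then have "\<forall>j. \<exists>m. m \<in> D (t j) \<and> \<phi> m = 0" by blast
  from choice[OF this] obtain m where m: "\<forall>j. m j \<in> D (t j) \<and> \<phi> (m j) = 0" by blast
  have tm: "\<And>j. t j \<ge> j" "\<And>j. m j \<in> D (t j)" "\<And>j. \<phi> (m j) = 0" using t m by auto
  have "\<forall>j. m j \<in> X" using tm X by blast
  then obtain m0 r where r: "m0 \<in> X" "strict_mono r" "(m \<circ> r) \<longlonglongrightarrow> m0"
    using seq_compactE[OF compact_imp_seq_compact[OF X(1)]] by blast
  have m0L: "m0 \<in> lsup D"
  proof (rule lsup_I[of "t \<circ> r"])
    show "\<And>j. j \<le> (t \<circ> r) j" using tm(1) seq_suble[OF r(2)] le_trans unfolding comp_apply by blast
  qed (use tm r in auto)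
  have phi0: "\<phi> m0 = 0"
  proof -
    have "(\<lambda>j. \<phi> ((m \<circ> r) j)) \<longlonglongrightarrow> \<phi> m0" using isCont_tendsto_compose[OF isc r(3)] .
    moreover have "(\<lambda>j. \<phi> ((m \<circ> r) j)) \<longlonglongrightarrow> 0" using tm(3) by simp
    ultimately show ?thesis by (rule LIMSEQ_unique)
  qed
  have "m0 \<in> A \<union> B" using m0L AB(4) by blast
  then show False using Aneg[of m0] Bpos[of m0] phi0 by auto
qed

lemma lsup_connected:
  fixes D :: "nat \<Rightarrow> 'a::metric_space set"
  assumes X: "compact X" "\<And>n. D n \<subseteq> X" and conn: "\<And>n. connected (D n)"
    and a: "\<And>n. a n \<in> D n" "a \<longlonglongrightarrow> a0"
  shows "connected (lsup D)" "a0 \<in> lsup D"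
proof -
  show a0: "a0 \<in> lsup D" by (rule lsup_I[of id a]) (use a in auto)
  show "connected (lsup D)"
    unfolding connected_closed_set[OF lsup_closed]
  proof clarify
    fix A B assume AB: "closed A" "closed B" "A \<noteq> {}" "B \<noteq> {}" "A \<union> B = lsup D" "A \<inter> B = {}"
    show False
    proof (cases "a0 \<in> A")
      case True
      then show ?thesis using lsup_connected_aux[OF X conn a, of A B] AB by auto
    next
      case False
      then have "a0 \<in> B" using a0 AB by auto
      then show ?thesis using lsup_connected_aux[OF X conn a, of B A] AB by auto
    qed
  qed
qed

lemma diam_le:
  fixes S :: "'a::metric_space set"
  assumes "\<And>x y. x \<in> S \<Longrightarrow> y \<in> S \<Longrightarrow> dist x y \<le> d" "0 \<le> d"
  shows "diameter S \<le> d"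
  using assms by (auto simp: diameter_def intro: cSUP_least)

lemma lim_reindex:
  assumes "s \<longlonglongrightarrow> a" "\<And>k. t k \<ge> k"
  shows "(\<lambda>k. s (t k)) \<longlonglongrightarrow> a"
proof -
  have "filterlim t at_top at_top" by (rule filterlim_at_top_mono[OF filterlim_ident]) (use assms(2) in auto)
  then show ?thesis using filterlim_compose[OF assms(1)] by blast
qed

lemma L1:
  fixes X :: "'a::metric_space set"
  assumes X: "compact X" and hom: "homeomorphism X X f g" and c: "c > 0"
    and cw: "\<forall>C. C \<subseteq> X \<and> compact C \<and> connected C \<and> (\<exists>x\<in>C. \<exists>y\<in>C. x \<noteq> y)
      \<longrightarrow> (SUP n. ereal (diameter (iterz f g n ` C))) > ereal c"
    and e: "4 * e \<le> c" "e > 0" and \<gamma>: "\<gamma> > 0"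
  shows "\<exists>N::nat. \<forall>C. C \<subseteq> X \<longrightarrow> connected C \<longrightarrow>
     (\<forall>j u v. \<bar>j\<bar> \<le> int N \<longrightarrow> u \<in> C \<longrightarrow> v \<in> C \<longrightarrow> dist (iterz f g j u) (iterz f g j v) \<le> 2*e)
      \<longrightarrow> (\<forall>u\<in>C. \<forall>v\<in>C. dist u v < \<gamma>)"
proof (rule ccontr)
  define P where "P N C \<longleftrightarrow> C \<subseteq> X \<and> connected C \<and>
     (\<forall>j u v. \<bar>j\<bar> \<le> int N \<longrightarrow> u \<in> C \<longrightarrow> v \<in> C \<longrightarrow> dist (iterz f g j u) (iterz f g j v) \<le> 2*e)
      \<and> (\<exists>u\<in>C. \<exists>v\<in>C. dist u v \<ge> \<gamma>)" for N C
  assume "\<not> ?thesis"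
  then have "\<forall>N. \<exists>C. P N C" unfolding P_def by (auto simp: not_less)
  from choice[OF this] obtain CC where CC: "\<And>N. P N (CC N)" by blast
  have "\<forall>N. \<exists>p. fst p \<in> CC N \<and> snd p \<in> CC N \<and> dist (fst p) (snd p) \<ge> \<gamma>"
  proof
    fix N
    from CC[of N] obtain u v where "u \<in> CC N" "v \<in> CC N" "dist u v \<ge> \<gamma>" unfolding P_def by blast
    then show "\<exists>p. fst p \<in> CC N \<and> snd p \<in> CC N \<and> dist (fst p) (snd p) \<ge> \<gamma>"
      by (intro exI[of _ "(u,v)"]) auto
  qed
  from choice[OF this] obtain Q where Q: "\<And>N. fst (Q N) \<in> CC N" "\<And>N. snd (Q N) \<in> CC N"
      "\<And>N. dist (fst (Q N)) (snd (Q N)) \<ge> \<gamma>" by blast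
  have CCX: "\<And>N. CC N \<subseteq> X" using CC unfolding P_def by auto
  have "\<forall>N. Q N \<in> X \<times> X"
  proof
    fix N show "Q N \<in> X \<times> X" using Q(1)[of N] Q(2)[of N] CCX[of N] by (auto simp: mem_Times_iff)
  qed
  then obtain l r where lr: "l \<in> X \<times> X" "strict_mono r" "(Q \<circ> r) \<longlonglongrightarrow> l"
    using seq_compactE[OF compact_imp_seq_compact[OF compact_Times[OF X X]]] by blast
  define a where "a = fst l"
  define b where "b = snd l"
  have ua: "(\<lambda>n. fst (Q (r n))) \<longlonglongrightarrow> a" unfolding a_def using tendsto_fst[OF lr(3)] by (simp add: o_def)
  have vb: "(\<lambda>n. snd (Q (r n))) \<longlonglongrightarrow> b" unfolding b_def using tendsto_snd[OF lr(3)] by (simp add: o_def)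
  define D where "D n = CC (r n)" for n
  define L where "L = lsup D"
  have DX: "\<And>n. D n \<subseteq> X" unfolding D_def using CCX by blast
  have Dc: "\<And>n. connected (D n)" unfolding D_def using CC unfolding P_def by blast
  have aD: "\<And>n. fst (Q (r n)) \<in> D n" unfolding D_def using Q by blast
  have Lconn: "connected L" and aL: "a \<in> L" unfolding L_def using lsup_connected[OF X DX Dc aD ua] by auto
  have bL: "b \<in> L" unfolding L_def by (rule lsup_I[of id "\<lambda>n. snd (Q (r n))"]) (use Q vb in \<open>auto simp: D_def\<close>)
  have LX: "L \<subseteq> X" unfolding L_def by (rule lsup_subset[OF compact_imp_closed[OF X] DX])
  have Lcomp: "compact L"
  proof -
    have "compact (L \<inter> X)" unfolding L_def using lsup_closed X by blast
    moreover have "L \<inter> X = L" using LX by blast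
    ultimately show ?thesis by simp
  qed
  have "dist a b \<ge> \<gamma>"
    using LIMSEQ_le_const[OF tendsto_dist[OF ua vb]] Q(3) by blast
  then have ab: "a \<noteq> b" using \<gamma> by auto
  have key: "dist (iterz f g j y) (iterz f g j a) \<le> 2 * e" if y: "y \<in> L" for j y
  proof -
    obtain t cc where tc: "\<And>k. t k \<ge> k" "\<And>k. cc k \<in> D (t k)" "cc \<longlonglongrightarrow> y"
      using lsup_E[of y D] y unfolding L_def by blast
    have yX: "y \<in> X" "a \<in> X" using y aL LX by auto
    have ccX: "\<And>k. cc k \<in> X" using tc DX by blast
    have aX: "\<And>k. fst (Q (r (t k))) \<in> X" using aD DX by blast
    have lim1: "(\<lambda>k. iterz f g j (cc k)) \<longlonglongrightarrow> iterz f g j y"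
      by (rule continuous_on_tendsto_compose[OF iterz_props(2)[OF hom] tc(3) yX(1)]) (use ccX in auto)
    have lim2: "(\<lambda>k. iterz f g j (fst (Q (r (t k))))) \<longlonglongrightarrow> iterz f g j a"
      by (rule continuous_on_tendsto_compose[OF iterz_props(2)[OF hom] lim_reindex[OF ua tc(1)] yX(2)]) (use aX in auto)
    have "\<exists>N. \<forall>k\<ge>N. dist (iterz f g j (cc k)) (iterz f g j (fst (Q (r (t k))))) \<le> 2 * e"
    proof (intro exI allI impI)
      fix k assume k: "k \<ge> nat \<bar>j\<bar>"
      have "r (t k) \<ge> t k" using seq_suble[OF lr(2)] by blast
      then have "\<bar>j\<bar> \<le> int (r (t k))" using k tc(1)[of k] by linarith
      moreover have "cc k \<in> CC (r (t k))" "fst (Q (r (t k))) \<in> CC (r (t k))"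
        using tc(2) Q(1) unfolding D_def by auto
      ultimately show "dist (iterz f g j (cc k)) (iterz f g j (fst (Q (r (t k))))) \<le> 2 * e"
        using CC[of "r (t k)"] unfolding P_def by blast
    qed
    then show ?thesis using LIMSEQ_le_const2[OF tendsto_dist[OF lim1 lim2]] by blast
  qed
  have diam: "diameter (iterz f g j ` L) \<le> 4*e" for j
  proof (rule diam_le)
    fix x y assume "x \<in> iterz f g j ` L" "y \<in> iterz f g j ` L"
    then obtain x1 y1 where xy: "x1 \<in> L" "y1 \<in> L" "x = iterz f g j x1" "y = iterz f g j y1" by blast
    have "dist (iterz f g j a) x \<le> 2 * e" using key[OF xy(1), of j] xy(3) by (simp add: dist_commute)
    moreover have "dist (iterz f g j a) y \<le> 2 * e" using key[OF xy(2), of j] xy(4) by (simp add: dist_commute)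
    ultimately show "dist x y \<le> 4 * e"
      using dist_triangle3[of x y "iterz f g j a"] by linarith
  qed (use e in auto)
  have "(SUP n. ereal (diameter (iterz f g n ` L))) \<le> ereal c"
  proof (rule SUP_least)
    fix n show "ereal (diameter (iterz f g n ` L)) \<le> ereal c" using diam[of n] e(1) by simp
  qed
  moreover have "(SUP n. ereal (diameter (iterz f g n ` L))) > ereal c"
    using cw LX Lcomp Lconn aL bL ab by blast
  ultimately show False by simp
qed

lemma back_iter:
  assumes "homeomorphism X X f g" "v \<in> X"
  shows "(g ^^ i) v = (g ^^ (i + m)) ((f ^^ m) v)"
proof -
  have "(g ^^ (i + m)) ((f ^^ m) v) = (g ^^ i) ((g ^^ m) ((f ^^ m) v))" by (simp add: funpow_add)
  then show ?thesis using hom_props(3)[OF assms] by simp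
qed

lemma strict_mono_add:
  assumes "strict_mono (n :: nat \<Rightarrow> nat)"
  shows "n k + d \<le> n (k + d)"
proof (induction d)
  case (Suc d)
  have "n (k + d) < n (k + Suc d)" using assms by (simp add: strict_mono_def)
  then show ?case using Suc by simp
qed simp

lemma case1_T:
  fixes X :: "'a::metric_space set"
  assumes hom: "homeomorphism X X f g" and KX: "K \<subseteq> X" and Kc: "connected K"
    and B: "\<And>s u v. u \<in> K \<Longrightarrow> v \<in> K \<Longrightarrow> dist ((g ^^ s) u) ((g ^^ s) v) \<le> 2 * e"
    and N: "\<forall>C. C \<subseteq> X \<longrightarrow> connected C \<longrightarrow>
     (\<forall>j u v. \<bar>j\<bar> \<le> int N \<longrightarrow> u \<in> C \<longrightarrow> v \<in> C \<longrightarrow> dist (iterz f g j u) (iterz f g j v) \<le> 2*e)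
      \<longrightarrow> (\<forall>u\<in>C. \<forall>v\<in>C. dist u v < \<gamma>)"
    and s: "s \<ge> N" and uv: "u \<in> K" "v \<in> K"
  shows "dist ((g ^^ s) u) ((g ^^ s) v) < \<gamma>"
proof -
  define C where "C = (g ^^ s) ` K"
  have CX: "C \<subseteq> X" unfolding C_def using hom_props(2)[OF hom] KX by blast
  have Cc: "connected C" unfolding C_def
    by (rule connected_continuous_image[OF continuous_on_subset[OF hom_props(6)[OF hom] KX] Kc])
  have "\<forall>j u v. \<bar>j\<bar> \<le> int N \<longrightarrow> u \<in> C \<longrightarrow> v \<in> C \<longrightarrow> dist (iterz f g j u) (iterz f g j v) \<le> 2*e"
  proof (intro allI impI)
    fix j u' v' assume j: "\<bar>j\<bar> \<le> int N" and u': "u' \<in> C" and v': "v' \<in> C"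
    obtain u1 v1 where uv1: "u1 \<in> K" "v1 \<in> K" "u' = (g ^^ s) u1" "v' = (g ^^ s) v1" using u' v' C_def by blast
    have js: "j \<le> int s" using j s by linarith
    have "iterz f g j u' = (g ^^ nat (int s - j)) u1" using iterz_g[OF hom _ js] uv1 KX by blast
    moreover have "iterz f g j v' = (g ^^ nat (int s - j)) v1" using iterz_g[OF hom _ js] uv1 KX by blast
    ultimately show "dist (iterz f g j u') (iterz f g j v') \<le> 2*e" using B uv1 by simp
  qed
  then have "\<forall>u\<in>C. \<forall>v\<in>C. dist u v < \<gamma>" using N CX Cc by blast
  then show ?thesis using uv C_def by blast
qed

lemma case1:
  fixes X :: "'a::metric_space set"
  assumes X: "compact X" and hom: "homeomorphism X X f g" and x: "x \<in> X"
    and KX: "K \<subseteq> X" and U: "openin (top_of_set X) U" "U \<subseteq> K" "z \<in> U"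
    and n: "strict_mono n" "\<And>k. (f ^^ n k) x \<in> U" "(\<lambda>k. (f ^^ n k) x) \<longlonglongrightarrow> z"
    and T: "\<And>\<gamma>. \<gamma> > 0 \<Longrightarrow> \<exists>M. \<forall>s\<ge>M. \<forall>u\<in>K. \<forall>v\<in>K. dist ((g ^^ s) u) ((g ^^ s) v) < \<gamma>"
  shows "is_periodic f x \<and> is_source X g x"
proof -
  define y where "y k = (f ^^ n k) x" for k
  have yU: "\<And>k. y k \<in> U" and yK: "\<And>k. y k \<in> K" using n(2) U(2) unfolding y_def by auto
  have xy: "\<And>i k. (g ^^ i) x = (g ^^ (i + n k)) (y k)" unfolding y_def using back_iter[OF hom x] by blast
  define V where "V k = X \<inter> (f ^^ n k) -` U" for k
  have Vopen: "openin (top_of_set X) (V k)" for k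
    unfolding V_def by (rule continuous_openin_preimage[OF hom_props(5)[OF hom] _ U(1)]) (use hom_props(1)[OF hom] in auto)
  have xV: "x \<in> V k" for k using x n(2) unfolding V_def by auto
  have Vback: "(g ^^ i) v = (g ^^ (i + n k)) ((f ^^ n k) v) \<and> (f ^^ n k) v \<in> K" if "v \<in> V k" for v i k
    using that back_iter[OF hom] U(2) unfolding V_def by blast
  have src1: "nbhd_in X (Wu_eps X g \<epsilon>' x) x" if e': "\<epsilon>' > 0" for \<epsilon>'
  proof -
    obtain M where M: "\<forall>s\<ge>M. \<forall>u\<in>K. \<forall>v\<in>K. dist ((g ^^ s) u) ((g ^^ s) v) < \<epsilon>'" using T[OF e'] by blast
    have nM: "n M \<ge> M" using seq_suble[OF n(1)] by blast
    have "V M \<subseteq> Wu_eps X g \<epsilon>' x"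
    proof
      fix v assume v: "v \<in> V M"
      have "dist ((g ^^ i) x) ((g ^^ i) v) \<le> \<epsilon>'" for i
      proof -
        have "dist ((g ^^ (i + n M)) (y M)) ((g ^^ (i + n M)) ((f ^^ n M) v)) < \<epsilon>'"
          using M nM yK Vback[OF v] by simp
        then show ?thesis using xy[of i M] Vback[OF v, of i] by simp
      qed
      then show "v \<in> Wu_eps X g \<epsilon>' x" using v unfolding Wu_eps_def V_def by auto
    qed
    then show ?thesis unfolding nbhd_in_def using Vopen xV by blast
  qed
  have src2: "\<exists>\<epsilon>'>0. Wu_eps X g \<epsilon>' x \<subseteq> Wu X g x"
  proof -
    obtain \<rho> where \<rho>: "\<rho> > 0" "ball x \<rho> \<inter> X \<subseteq> V 0" using Vopen[of 0] xV[of 0] unfolding openin_contains_ball by blast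
    have "Wu_eps X g (\<rho>/2) x \<subseteq> Wu X g x"
    proof
      fix w assume w: "w \<in> Wu_eps X g (\<rho>/2) x"
      then have wX: "w \<in> X" and "dist x w \<le> \<rho>/2" unfolding Wu_eps_def by (auto dest: spec[of _ 0])
      then have wV: "w \<in> V 0" using \<rho> by auto
      have "(\<lambda>i. dist ((g ^^ i) x) ((g ^^ i) w)) \<longlonglongrightarrow> 0"
        unfolding lim_sequentially
      proof (intro allI impI)
        fix r :: real assume r: "r > 0"
        obtain M where M: "\<forall>s\<ge>M. \<forall>u\<in>K. \<forall>v\<in>K. dist ((g ^^ s) u) ((g ^^ s) v) < r" using T[OF r] by blast
        have "dist (dist ((g ^^ i) x) ((g ^^ i) w)) 0 < r" if i: "i \<ge> M" for i
        proof -
          have "dist ((g ^^ (i + n 0)) (y 0)) ((g ^^ (i + n 0)) ((f ^^ n 0) w)) < r"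
            using M i yK Vback[OF wV] by simp
          then show ?thesis using xy[of i 0] Vback[OF wV, of i] by simp
        qed
        then show "\<exists>no. \<forall>i\<ge>no. dist (dist ((g ^^ i) x) ((g ^^ i) w)) 0 < r" by blast
      qed
      then show "w \<in> Wu X g x" using wX unfolding Wu_def by blast
    qed
    then show ?thesis using \<rho> by (intro exI[of _ "\<rho>/2"]) auto
  qed
  obtain \<rho> where \<rho>: "\<rho> > 0" "ball z \<rho> \<inter> X \<subseteq> U" using U(1,3) unfolding openin_contains_ball by blast
  have ylim: "y \<longlonglongrightarrow> z" using n(3) unfolding y_def by simp
  obtain k0 where k0: "dist (y k0) z < \<rho>/2" using ylim \<rho>(1) unfolding lim_sequentially
    by (metis half_gt_zero order_refl)
  obtain M where M: "\<forall>s\<ge>M. \<forall>u\<in>K. \<forall>v\<in>K. dist ((g ^^ s) u) ((g ^^ s) v) < \<rho>/2"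
    using T[of "\<rho>/2"] \<rho>(1) by auto
  define l where "l = k0 + (M + 1)"
  define m where "m = n l - n k0"
  have nl: "n l = m + n k0" "m \<ge> M + 1"
    using strict_mono_add[OF n(1), of k0 "M+1"] unfolding m_def l_def by auto
  have m0: "m > 0" using nl by simp
  have ylk: "(g ^^ m) (y l) = y k0"
  proof -
    have "y l = (f ^^ m) ((f ^^ n k0) x)" unfolding y_def nl(1) by (simp add: funpow_add)
    then show ?thesis using hom_props(3)[OF hom] hom_props(1)[OF hom] x unfolding y_def by simp
  qed
  have hK: "(g ^^ m) u \<in> K" if u: "u \<in> K" for u
  proof -
    have "dist ((g ^^ m) u) ((g ^^ m) (y l)) < \<rho>/2" using M nl(2) u yK by simp
    then have "dist ((g ^^ m) u) z < \<rho>" using ylk k0 dist_triangle[of "(g ^^ m) u" z "y k0"] by simp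
    moreover have "(g ^^ m) u \<in> X" using hom_props(2)[OF hom] u KX by blast
    ultimately show ?thesis using \<rho>(2) U(2) by (auto simp: dist_commute)
  qed
  have hqK: "(g ^^ (m * q)) u \<in> K" if "u \<in> K" for q u
  proof (induction q)
    case 0 then show ?case using that by simp
  next
    case (Suc q)
    have "(g ^^ (m * Suc q)) u = (g ^^ m) ((g ^^ (m * q)) u)" by (simp add: funpow_add)
    then show ?case using hK[OF Suc] by simp
  qed
  have zK: "z \<in> K" using U by blast
  define p where "p q = (g ^^ (m * q)) z" for q
  have pX: "\<And>q. p q \<in> X" unfolding p_def using hqK zK KX by blast
  have pC: "Cauchy p"
    unfolding Cauchy_def
  proof (intro allI impI)
    fix \<gamma> :: real assume \<gamma>: "\<gamma> > 0"
    obtain M' where M': "\<forall>s\<ge>M'. \<forall>u\<in>K. \<forall>v\<in>K. dist ((g ^^ s) u) ((g ^^ s) v) < \<gamma>" using T[OF \<gamma>] by blast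
    have *: "dist (p q1) (p q2) < \<gamma>" if "q1 \<ge> M'" "q2 \<ge> q1" for q1 q2
    proof -
      have e: "m * q2 = m * q1 + m * (q2 - q1)" using that by (simp add: diff_mult_distrib2)
      have "p q2 = (g ^^ (m * q1 + m * (q2 - q1))) z" unfolding p_def by (subst e[symmetric]) (rule refl)
      then have "p q2 = (g ^^ (m * q1)) ((g ^^ (m * (q2 - q1))) z)" by (simp add: funpow_add)
      moreover have "m * q1 \<ge> M'"
      proof -
        have "q1 \<le> m * q1" using m0 by simp
        then show ?thesis using that(1) by linarith
      qed
      ultimately show ?thesis using M' hqK zK unfolding p_def by (simp add: dist_commute)
    qed
    show "\<exists>M. \<forall>q1\<ge>M. \<forall>q2\<ge>M. dist (p q1) (p q2) < \<gamma>"
    proof (intro exI allI impI)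
      fix q1 q2 assume "q1 \<ge> M'" "q2 \<ge> M'"
      then show "dist (p q1) (p q2) < \<gamma>" using *[of q1 q2] *[of q2 q1]
        by (cases "q1 \<le> q2") (auto simp: dist_commute)
    qed
  qed
  obtain p0 where p0: "p0 \<in> X" "p \<longlonglongrightarrow> p0"
    using compact_imp_complete[OF X] pX pC unfolding complete_def by blast
  have hp0: "(g ^^ m) p0 = p0"
  proof -
    have "(\<lambda>q. (g ^^ m) (p q)) \<longlonglongrightarrow> (g ^^ m) p0"
      by (rule continuous_on_tendsto_compose[OF hom_props(6)[OF hom] p0(2) p0(1)]) (use pX in auto)
    moreover have "(\<lambda>q. (g ^^ m) (p q)) = (\<lambda>q. p (Suc q))" unfolding p_def by (simp add: funpow_add)
    moreover have "(\<lambda>q. p (Suc q)) \<longlonglongrightarrow> p0" using p0(2) by (rule LIMSEQ_Suc)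
    ultimately show ?thesis using LIMSEQ_unique by metis
  qed
  have unif: "\<exists>Q. \<forall>q\<ge>Q. \<forall>u\<in>K. dist ((g ^^ (m * q)) u) p0 < r" if r: "r > 0" for r
  proof -
    obtain M' where M': "\<forall>s\<ge>M'. \<forall>u\<in>K. \<forall>v\<in>K. dist ((g ^^ s) u) ((g ^^ s) v) < r/2" using T[of "r/2"] r by auto
    obtain Q1 where Q1: "\<forall>q\<ge>Q1. dist (p q) p0 < r/2" using p0(2) r unfolding lim_sequentially
      by (metis half_gt_zero)
    have "dist ((g ^^ (m * q)) u) p0 < r" if "q \<ge> max M' Q1" "u \<in> K" for q u
    proof -
      have "m * q \<ge> M'"
      proof -
        have "q \<le> m * q" using m0 by simp
        then show ?thesis using that(1) by linarith
      qed
      then have "dist ((g ^^ (m * q)) u) (p q) < r/2" using M' that zK unfolding p_def by simp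
      moreover have "dist (p q) p0 < r/2" using Q1 that by simp
      ultimately show ?thesis using dist_triangle[of "(g ^^ (m * q)) u" p0 "p q"] by simp
    qed
    then show ?thesis by blast
  qed
  have approx: "\<exists>s<m. dist ((g ^^ s) p0) x < r" if r: "r > 0" for r
  proof -
    obtain d where d: "d > 0" "\<forall>i\<le>m. \<forall>u\<in>X. \<forall>v\<in>X. dist u v < d \<longrightarrow> dist ((g ^^ i) u) ((g ^^ i) v) < r"
      using unif_fin[OF X, of "\<lambda>i. g ^^ i", OF hom_props(6)[OF hom] r] by blast
    obtain Q where Q: "\<forall>q\<ge>Q. \<forall>u\<in>K. dist ((g ^^ (m * q)) u) p0 < d" using unif[OF d(1)] by blast
    define k' where "k' = m * Q + m"
    have nk: "n k' \<ge> m * Q + m" using seq_suble[OF n(1), of k'] unfolding k'_def by simp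
    define s where "s = n k' mod m"
    define q where "q = n k' div m"
    have sm: "s < m" unfolding s_def using m0 by simp
    have qQ: "q \<ge> Q"
    proof -
      have "m * Q \<le> n k'" using nk by simp
      then have "Q \<le> n k' div m" using m0 by (metis div_le_mono nonzero_mult_div_cancel_left not_gr0)
      then show ?thesis unfolding q_def .
    qed
    have "n k' = s + m * q" unfolding s_def q_def by simp
    then have "x = (g ^^ s) ((g ^^ (m * q)) (y k'))"
      using xy[of 0 k'] by (simp add: funpow_add)
    moreover have "dist ((g ^^ (m * q)) (y k')) p0 < d" using Q qQ yK by blast
    moreover have "(g ^^ (m * q)) (y k') \<in> X" using hom_props(2)[OF hom] yK KX by blast
    ultimately have "dist x ((g ^^ s) p0) < r" using d(2) sm p0(1) by simp
    then show ?thesis using sm by (auto simp: dist_commute)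
  qed
  define S where "S = (\<lambda>s. (g ^^ s) p0) ` {..<m}"
  have "x \<in> closure S" unfolding closure_approachable
  proof (intro allI impI)
    fix r :: real assume "r > 0"
    then obtain s where "s < m" "dist ((g ^^ s) p0) x < r" using approx by blast
    then show "\<exists>y\<in>S. dist y x < r" unfolding S_def by blast
  qed
  moreover have "closed S" unfolding S_def by (rule finite_imp_closed) simp
  ultimately have "x \<in> S" by (simp add: closure_closed)
  then obtain s where s: "x = (g ^^ s) p0" unfolding S_def by blast
  have "(g ^^ m) x = x"
  proof -
    have "(g ^^ m) x = (g ^^ (m + s)) p0" unfolding s by (simp add: funpow_add)
    also have "\<dots> = (g ^^ (s + m)) p0" by (simp add: add.commute)
    also have "\<dots> = (g ^^ s) ((g ^^ m) p0)" by (simp add: funpow_add)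
    finally have "(g ^^ m) x = (g ^^ s) ((g ^^ m) p0)" .
    then show ?thesis using hp0 s by simp
  qed
  then have "(f ^^ m) x = x" using hom_props(4)[OF hom x, of m] by simp
  then have "is_periodic f x" unfolding is_periodic_def using m0 by blast
  then show ?thesis unfolding is_source_def using src1 src2 by blast
qed

lemma case2_bump:
  fixes X :: "'a::metric_space set"
  assumes X: "compact X" and hom: "homeomorphism X X f g" and x: "x \<in> X" and e: "e > 0"
    and K: "K \<subseteq> X" "compact K" "connected K" and yK: "(f ^^ nk) x \<in> K"
    and notsub: "\<exists>u\<in>K. \<exists>i\<le>nk. dist ((f ^^ i) x) ((f ^^ i) ((g ^^ nk) u)) > e"
  shows "\<exists>w \<in> connected_component_set {v \<in> (g ^^ nk) ` K. \<forall>i\<le>nk. dist ((f ^^ i) x) ((f ^^ i) v) \<le> e} x.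
            (\<forall>i\<le>nk. dist ((f ^^ i) x) ((f ^^ i) w) \<le> e) \<and> (\<exists>i\<le>nk. dist ((f ^^ i) x) ((f ^^ i) w) \<ge> e)"
proof -
  define A where "A = (g ^^ nk) ` K"
  define S where "S = {v \<in> A. \<forall>i\<le>nk. dist ((f ^^ i) x) ((f ^^ i) v) \<le> e}"
  have AX: "A \<subseteq> X" unfolding A_def using hom_props(2)[OF hom] K(1) by blast
  have Acomp: "compact A" unfolding A_def
    by (rule compact_continuous_image[OF continuous_on_subset[OF hom_props(6)[OF hom] K(1)] K(2)])
  have Aconn: "connected A" unfolding A_def
    by (rule connected_continuous_image[OF continuous_on_subset[OF hom_props(6)[OF hom] K(1)] K(3)])
  have xA: "x \<in> A" unfolding A_def using yK hom_props(3)[OF hom x, of nk] by (metis image_eqI)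
  have xS: "x \<in> S" unfolding S_def using xA e by auto
  have SA: "S \<subseteq> A" unfolding S_def by blast
  have Sclosed: "closed S"
    unfolding closed_sequential_limits
  proof (intro allI impI, elim conjE)
    fix v l assume v: "\<forall>n. v n \<in> S" and l: "v \<longlonglongrightarrow> l"
    have lA: "l \<in> A" using closed_sequentially[OF compact_imp_closed[OF Acomp] _ l] v SA by blast
    have "dist ((f ^^ i) x) ((f ^^ i) l) \<le> e" if i: "i \<le> nk" for i
    proof -
      have "(\<lambda>n. (f ^^ i) (v n)) \<longlonglongrightarrow> (f ^^ i) l"
        proof (rule continuous_on_tendsto_compose[OF hom_props(5)[OF hom] l])
        show "l \<in> X" using lA AX by blast
        have "\<forall>n. v n \<in> X" using v SA AX by blast
        then show "\<forall>\<^sub>F n in sequentially. v n \<in> X" by simp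
      qed
      then have "(\<lambda>n. dist ((f ^^ i) x) ((f ^^ i) (v n))) \<longlonglongrightarrow> dist ((f ^^ i) x) ((f ^^ i) l)"
        by (intro tendsto_intros)
      moreover have "\<forall>n. dist ((f ^^ i) x) ((f ^^ i) (v n)) \<le> e" using v i unfolding S_def by blast
      ultimately show ?thesis by (meson LIMSEQ_le_const2)
    qed
    then show "l \<in> S" unfolding S_def using lA by blast
  qed
  have SneA: "S \<noteq> A" using notsub unfolding S_def A_def by force
  define C where "C = connected_component_of_set (top_of_set S) x"
  have sub: "subtopology (top_of_set A) S = top_of_set S"
    using SA by (simp add: subtopology_subtopology inf_absorb2)
  have Ccomp: "C \<in> connected_components_of (subtopology (top_of_set A) S)"
    unfolding sub C_def using xS by (simp add: connected_component_in_connected_components_of)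
  have "C \<inter> (top_of_set A) frontier_of S \<noteq> {}"
  proof (rule boundary_bumping_theorem_closed[OF _ _ _ _ _ Ccomp])
    show "connected_space (top_of_set A)" using Aconn by (simp add: connected_space_subtopology)
    show "compact_space (top_of_set A)" using Acomp by (simp add: compact_space_subtopology)
    show "Hausdorff_space (top_of_set A)" by (simp add: Hausdorff_space_subtopology)
    show "closedin (top_of_set A) S" by (rule closed_subset[OF SA Sclosed])
    show "S \<noteq> topspace (top_of_set A)" using SneA by simp
  qed
  then obtain w where wC: "w \<in> C" and wF: "w \<in> (top_of_set A) frontier_of S" by blast
  have Cconn: "connected C" and CS: "C \<subseteq> S"
    using connectedin_connected_component_of[of "top_of_set S" x] unfolding C_def
    by (auto simp: connectedin_subtopology)
  have Csub: "C \<subseteq> connected_component_set S x"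
    by (rule connected_component_maximal[OF _ Cconn CS]) (use xS in \<open>simp add: C_def connected_component_of_refl\<close>)
  have wS: "w \<in> S" using wC CS by blast
  have "\<exists>i\<le>nk. dist ((f ^^ i) x) ((f ^^ i) w) \<ge> e"
  proof (rule ccontr)
    assume "\<not> ?thesis"
    then have lt: "\<forall>i\<le>nk. dist ((f ^^ i) x) ((f ^^ i) w) < e" by auto
    define mx where "mx = Max ((\<lambda>i. dist ((f ^^ i) x) ((f ^^ i) w)) ` {..nk})"
    have mxe: "mx < e" unfolding mx_def using lt by (subst Max_less_iff) auto
    have mxge: "dist ((f ^^ i) x) ((f ^^ i) w) \<le> mx" if "i \<le> nk" for i
      unfolding mx_def using that by (intro Max_ge) auto
    obtain d where d: "d > 0" "\<forall>i\<le>nk. \<forall>u\<in>X. \<forall>v\<in>X. dist u v < d \<longrightarrow> dist ((f ^^ i) u) ((f ^^ i) v) < e - mx"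
      using unif_fin[OF X, of "\<lambda>i. f ^^ i", OF hom_props(5)[OF hom], of "e - mx" nk] mxe by auto
    have wX: "w \<in> X" using wS SA AX by blast
    have "A \<inter> ball w d \<subseteq> S"
    proof
      fix v assume v: "v \<in> A \<inter> ball w d"
      have "dist ((f ^^ i) x) ((f ^^ i) v) \<le> e" if i: "i \<le> nk" for i
      proof -
        have "dist ((f ^^ i) w) ((f ^^ i) v) < e - mx" using d(2) i wX v AX by (auto simp: dist_commute)
        then show ?thesis using mxge[OF i] dist_triangle[of "(f ^^ i) x" "(f ^^ i) v" "(f ^^ i) w"] by linarith
      qed
      then show "v \<in> S" unfolding S_def using v by blast
    qed
    moreover have "openin (top_of_set A) (A \<inter> ball w d)" by (rule openin_open_Int) simp
    moreover have "w \<in> A \<inter> ball w d" using d wS SA by auto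
    ultimately have "w \<in> (top_of_set A) interior_of S" unfolding interior_of_def by blast
    then show False using wF unfolding frontier_of_def by blast
  qed
  then show ?thesis using wC Csub wS unfolding S_def A_def by blast
qed

theorem mainTheorem9:
  fixes X :: "'a::metric_space set" and f g :: "'a \<Rightarrow> 'a"
  assumes "compact X" and "homeomorphism X X f g" and "cw_expansive X f g"
  shows "\<forall>\<epsilon>>0. \<exists>\<delta>>0. \<forall>x\<in>X. (\<exists>z\<in>omega_limit f x. locally_connected_at X z) \<longrightarrow>
           ((is_periodic f x \<and> is_source X g x) \<or> diameter (CWs X f \<epsilon> x) \<ge> \<delta>)"
proof (intro allI impI)
  fix \<epsilon> :: real assume \<epsilon>: "\<epsilon> > 0"
  note X = assms(1) and hom = assms(2)
  obtain c where c: "c > 0" and cw: "\<forall>C. C \<subseteq> X \<and> compact C \<and> connected C \<and> (\<exists>x\<in>C. \<exists>y\<in>C. x \<noteq> y)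
      \<longrightarrow> (SUP n. ereal (diameter (iterz f g n ` C))) > ereal c"
    using assms(3) unfolding cw_expansive_def by blast
  define e where "e = min \<epsilon> (c/4)"
  have e: "e > 0" "4 * e \<le> c" "e \<le> \<epsilon>" unfolding e_def using c \<epsilon> by auto
  have L1e: "\<exists>N::nat. \<forall>C. C \<subseteq> X \<longrightarrow> connected C \<longrightarrow>
     (\<forall>j u v. \<bar>j\<bar> \<le> int N \<longrightarrow> u \<in> C \<longrightarrow> v \<in> C \<longrightarrow> dist (iterz f g j u) (iterz f g j v) \<le> 2*e)
      \<longrightarrow> (\<forall>u\<in>C. \<forall>v\<in>C. dist u v < \<gamma>)" if "\<gamma> > 0" for \<gamma>
    by (rule L1[OF X hom c cw e(2) e(1) that])
  obtain N1 where N1: "\<forall>C. C \<subseteq> X \<longrightarrow> connected C \<longrightarrow>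
     (\<forall>j u v. \<bar>j\<bar> \<le> int N1 \<longrightarrow> u \<in> C \<longrightarrow> v \<in> C \<longrightarrow> dist (iterz f g j u) (iterz f g j v) \<le> 2*e)
      \<longrightarrow> (\<forall>u\<in>C. \<forall>v\<in>C. dist u v < e/2)"
    using L1e[of "e/2"] e by auto
  obtain \<delta>1 where \<delta>1: "\<delta>1 > 0" "\<forall>i\<le>N1. \<forall>u\<in>X. \<forall>v\<in>X. dist u v < \<delta>1 \<longrightarrow> dist ((f ^^ i) u) ((f ^^ i) v) < e"
    using unif_fin[OF X, of "\<lambda>i. f ^^ i", OF hom_props(5)[OF hom] e(1)] by blast
  obtain \<eta> where \<eta>: "\<eta> > 0" "\<forall>i\<le>N1. \<forall>u\<in>X. \<forall>v\<in>X. dist u v < \<eta> \<longrightarrow> dist ((g ^^ i) u) ((g ^^ i) v) < e"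
    using unif_fin[OF X, of "\<lambda>i. g ^^ i", OF hom_props(6)[OF hom] e(1)] by blast
  show "\<exists>\<delta>>0. \<forall>x\<in>X. (\<exists>z\<in>omega_limit f x. locally_connected_at X z) \<longrightarrow>
           ((is_periodic f x \<and> is_source X g x) \<or> diameter (CWs X f \<epsilon> x) \<ge> \<delta>)"
  proof (intro exI[of _ \<delta>1] conjI ballI impI)
    show "\<delta>1 > 0" by (rule \<delta>1(1))
    fix x assume x: "x \<in> X" and "\<exists>z\<in>omega_limit f x. locally_connected_at X z"
    then obtain z where z: "z \<in> omega_limit f x" "locally_connected_at X z" by blast
    obtain r where r: "strict_mono r" "(\<lambda>k. (f ^^ r k) x) \<longlonglongrightarrow> z"
      using z(1) unfolding omega_limit_def by blast
    have zX: "z \<in> X"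
      by (rule closed_sequentially[OF compact_imp_closed[OF X] _ r(2)]) (use hom_props(1)[OF hom] x in auto)
    define V0 where "V0 = X \<inter> ball z (\<eta>/3)"
    have "nbhd_in X V0 z" unfolding nbhd_in_def V0_def
      using zX \<eta>(1) by (intro exI[of _ "X \<inter> ball z (\<eta>/3)"]) (auto intro: openin_open_Int)
    then obtain N0 where N0: "N0 \<subseteq> V0" "N0 \<subseteq> X" "connected N0" "nbhd_in X N0 z"
      using z(2) unfolding locally_connected_at_def by blast
    then obtain U where U: "openin (top_of_set X) U" "z \<in> U" "U \<subseteq> N0" unfolding nbhd_in_def by blast
    define K where "K = closure N0"
    have KX: "K \<subseteq> X" unfolding K_def using N0(2) closure_minimal compact_imp_closed[OF X] by blast
    have Kcomp: "compact K"
    proof -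
      have "compact (K \<inter> X)" unfolding K_def using X by blast
      moreover have "K \<inter> X = K" using KX by blast
      ultimately show ?thesis by simp
    qed
    have Kconn: "connected K" unfolding K_def using N0(3) by (rule connected_imp_connected_closure)
    have UK: "U \<subseteq> K" unfolding K_def using U(3) closure_subset by blast
    have Kball: "K \<subseteq> cball z (\<eta>/3)" unfolding K_def
      by (rule closure_minimal) (use N0(1) V0_def in auto)
    have Kdist: "dist u v < \<eta>" if "u \<in> K" "v \<in> K" for u v
    proof -
      have "dist z u \<le> \<eta>/3" "dist z v \<le> \<eta>/3" using Kball that by auto
      then show ?thesis using dist_triangle3[of u v z] \<eta>(1) by linarith
    qed
    obtain \<rho> where \<rho>: "\<rho> > 0" "ball z \<rho> \<inter> X \<subseteq> U" using U(1,2) unfolding openin_contains_ball by blast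
    obtain k0 where k0: "\<forall>k\<ge>k0. dist ((f ^^ r k) x) z < \<rho>" using r(2) \<rho>(1) unfolding lim_sequentially by blast
    define n where "n k = r (k + k0)" for k
    have n_mono: "strict_mono n" unfolding n_def using r(1) by (simp add: strict_mono_def)
    have nU: "(f ^^ n k) x \<in> U" for k
    proof -
      have "dist z ((f ^^ n k) x) < \<rho>" using k0 unfolding n_def by (simp add: dist_commute)
      moreover have "(f ^^ n k) x \<in> X" using hom_props(1)[OF hom] x by blast
      ultimately show ?thesis using \<rho>(2) by auto
    qed
    have nlim: "(\<lambda>k. (f ^^ n k) x) \<longlonglongrightarrow> z" unfolding n_def
      using LIMSEQ_ignore_initial_segment[OF r(2), of k0] by simp
    have nK: "(f ^^ n k) x \<in> K" for k using nU UK by blast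
    have xback: "x = (g ^^ n k) ((f ^^ n k) x)" for k using hom_props(3)[OF hom x] by simp
    show "(is_periodic f x \<and> is_source X g x) \<or> diameter (CWs X f \<epsilon> x) \<ge> \<delta>1"
    proof (cases "\<forall>K0. \<exists>k\<ge>K0. \<forall>u\<in>K. \<forall>i\<le>n k. dist ((f ^^ i) x) ((f ^^ i) ((g ^^ n k) u)) \<le> e")
      case True
      have B: "dist ((g ^^ s) u) ((g ^^ s) v) \<le> 2 * e" if uv: "u \<in> K" "v \<in> K" for s u v
      proof -
        obtain k where k: "k \<ge> s" "\<forall>u\<in>K. \<forall>i\<le>n k. dist ((f ^^ i) x) ((f ^^ i) ((g ^^ n k) u)) \<le> e"
          using True by blast
        have nk: "n k \<ge> s" using seq_suble[OF n_mono, of k] k(1) by linarith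
        have eu: "(f ^^ (n k - s)) ((g ^^ n k) u) = (g ^^ s) u" using fg_shift[OF hom, of u "n k - s" "n k"] uv KX nk by auto
        have ev: "(f ^^ (n k - s)) ((g ^^ n k) v) = (g ^^ s) v" using fg_shift[OF hom, of v "n k - s" "n k"] uv KX nk by auto
        have le: "n k - s \<le> n k" by simp
        have "dist ((f ^^ (n k - s)) x) ((f ^^ (n k - s)) ((g ^^ n k) u)) \<le> e" using k(2) uv(1) le by blast
        moreover have "dist ((f ^^ (n k - s)) x) ((f ^^ (n k - s)) ((g ^^ n k) v)) \<le> e" using k(2) uv(2) le by blast
        ultimately have "dist ((f ^^ (n k - s)) x) ((g ^^ s) u) \<le> e" "dist ((f ^^ (n k - s)) x) ((g ^^ s) v) \<le> e"
          using eu ev by simp_all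
        then show ?thesis using dist_triangle3[of "(g ^^ s) u" "(g ^^ s) v" "(f ^^ (n k - s)) x"] by linarith
      qed
      have T: "\<exists>M. \<forall>s\<ge>M. \<forall>u\<in>K. \<forall>v\<in>K. dist ((g ^^ s) u) ((g ^^ s) v) < \<gamma>" if \<gamma>: "\<gamma> > 0" for \<gamma>
      proof -
        obtain N where N: "\<forall>C. C \<subseteq> X \<longrightarrow> connected C \<longrightarrow>
          (\<forall>j u v. \<bar>j\<bar> \<le> int N \<longrightarrow> u \<in> C \<longrightarrow> v \<in> C \<longrightarrow> dist (iterz f g j u) (iterz f g j v) \<le> 2*e)
          \<longrightarrow> (\<forall>u\<in>C. \<forall>v\<in>C. dist u v < \<gamma>)" using L1e[OF \<gamma>] by blast
        show ?thesis using case1_T[OF hom KX Kconn B N] by blast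
      qed
      have "is_periodic f x \<and> is_source X g x"
        by (rule case1[OF X hom x KX U(1) UK U(2) n_mono nU nlim T])
      then show ?thesis by blast
    next
      case False
      then obtain K0 where K0: "\<forall>k\<ge>K0. \<exists>u\<in>K. \<exists>i\<le>n k. dist ((f ^^ i) x) ((f ^^ i) ((g ^^ n k) u)) > e"
        by (metis not_le)
      define SS where "SS k = {v \<in> (g ^^ n k) ` K. \<forall>i\<le>n k. dist ((f ^^ i) x) ((f ^^ i) v) \<le> e}" for k
      define CC where "CC k = connected_component_set (SS k) x" for k
      have SSX: "SS k \<subseteq> X" for k unfolding SS_def using hom_props(2)[OF hom] KX by blast
      have xSS: "x \<in> SS k" for k unfolding SS_def using xback[of k] nK[of k] e(1) by auto
      have CCX: "CC k \<subseteq> X" for k unfolding CC_def using SSX connected_component_subset by blast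
      have CCc: "connected (CC k)" for k unfolding CC_def by (rule connected_connected_component)
      have xCC: "x \<in> CC k" for k unfolding CC_def using xSS by (simp add: connected_component_refl)
      have CCS: "CC k \<subseteq> SS k" for k unfolding CC_def by (rule connected_component_subset)
      have far: "\<exists>w \<in> CC k. dist x w \<ge> \<delta>1" if k: "k \<ge> K0" for k
      proof -
        obtain w where w: "w \<in> CC k" "\<forall>i\<le>n k. dist ((f ^^ i) x) ((f ^^ i) w) \<le> e"
            "\<exists>i\<le>n k. dist ((f ^^ i) x) ((f ^^ i) w) \<ge> e"
          using case2_bump[OF X hom x e(1) KX Kcomp Kconn nK[of k]] K0 k unfolding CC_def SS_def by blast
        obtain i where i: "i \<le> n k" "dist ((f ^^ i) x) ((f ^^ i) w) \<ge> e" using w(3) by blast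
        have wX: "w \<in> X" using w(1) CCX by blast
        show ?thesis
        proof (cases "i \<le> N1")
          case True
          have "dist x w \<ge> \<delta>1"
          proof (rule ccontr)
            assume "\<not> ?thesis"
            then have "dist ((f ^^ i) x) ((f ^^ i) w) < e" using \<delta>1(2) True x wX by auto
            then show False using i by linarith
          qed
          then show ?thesis using w(1) by blast
        next
          case iN: False
          show ?thesis
          proof (cases "n k \<le> i + N1")
            case True
            obtain u where u: "u \<in> K" "w = (g ^^ n k) u" using w(1) CCS unfolding SS_def by blast
            have "(f ^^ i) w = (g ^^ (n k - i)) u" using fg_shift[OF hom _ i(1)] u KX by blast
            moreover have "(f ^^ i) x = (g ^^ (n k - i)) ((f ^^ n k) x)"
              using fg_shift[OF hom _ i(1)] xback[of k] nK[of k] KX by (metis subsetD)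
            moreover have "dist ((g ^^ (n k - i)) ((f ^^ n k) x)) ((g ^^ (n k - i)) u) < e"
            proof -
              have "n k - i \<le> N1" using True by linarith
              moreover have "(f ^^ n k) x \<in> X" "u \<in> X" using nK[of k] u(1) KX by auto
              ultimately show ?thesis using \<eta>(2) Kdist[OF nK[of k] u(1)] by blast
            qed
            ultimately show ?thesis using i(2) by simp
          next
            case False
            define C' where "C' = (f ^^ i) ` CC k"
            have C'X: "C' \<subseteq> X" unfolding C'_def using hom_props(1)[OF hom] CCX by blast
            have C'c: "connected C'" unfolding C'_def
              by (rule connected_continuous_image[OF continuous_on_subset[OF hom_props(5)[OF hom] CCX] CCc])
            have "\<forall>j u v. \<bar>j\<bar> \<le> int N1 \<longrightarrow> u \<in> C' \<longrightarrow> v \<in> C' \<longrightarrow> dist (iterz f g j u) (iterz f g j v) \<le> 2*e"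
            proof (intro allI impI)
              fix j u' v' assume j: "\<bar>j\<bar> \<le> int N1" and u': "u' \<in> C'" and v': "v' \<in> C'"
              obtain u1 v1 where uv1: "u1 \<in> CC k" "v1 \<in> CC k" "u' = (f ^^ i) u1" "v' = (f ^^ i) v1"
                using u' v' C'_def by blast
              have ji: "- j \<le> int i" using j iN by linarith
              have ij: "nat (int i + j) \<le> n k" using j False by linarith
              have "iterz f g j u' = (f ^^ nat (int i + j)) u1" using iterz_f[OF hom _ ji] uv1 CCX by blast
              moreover have "iterz f g j v' = (f ^^ nat (int i + j)) v1" using iterz_f[OF hom _ ji] uv1 CCX by blast
              moreover have "dist ((f ^^ nat (int i + j)) x) ((f ^^ nat (int i + j)) u1) \<le> e"
                "dist ((f ^^ nat (int i + j)) x) ((f ^^ nat (int i + j)) v1) \<le> e"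
                using uv1 CCS ij unfolding SS_def by blast+
              ultimately show "dist (iterz f g j u') (iterz f g j v') \<le> 2*e"
                using dist_triangle3[of "iterz f g j u'" "iterz f g j v'" "(f ^^ nat (int i + j)) x"] by simp
            qed
            then have "\<forall>u\<in>C'. \<forall>v\<in>C'. dist u v < e/2" using N1 C'X C'c by blast
            moreover have "(f ^^ i) x \<in> C'" "(f ^^ i) w \<in> C'" unfolding C'_def using xCC w(1) by auto
            ultimately have "dist ((f ^^ i) x) ((f ^^ i) w) < e/2" by blast
            then show ?thesis using i(2) e(1) by linarith
          qed
        qed
      qed
      define D where "D j = CC (j + K0)" for j
      have "\<forall>j. \<exists>w. w \<in> D j \<and> dist x w \<ge> \<delta>1"
      proof
        fix j show "\<exists>w. w \<in> D j \<and> dist x w \<ge> \<delta>1" using far[of "j + K0"] unfolding D_def by auto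
      qed
      from choice[OF this] obtain W where W: "\<And>j. W j \<in> D j" "\<And>j. dist x (W j) \<ge> \<delta>1" by blast
      have DX: "\<And>j. D j \<subseteq> X" unfolding D_def using CCX by blast
      have Dc: "\<And>j. connected (D j)" unfolding D_def using CCc by blast
      have xD: "\<And>j. x \<in> D j" unfolding D_def using xCC by blast
      define L where "L = lsup D"
      have Lc: "connected L" and xL: "x \<in> L"
        unfolding L_def using lsup_connected[OF X DX Dc xD tendsto_const] by auto
      have "\<forall>j. W j \<in> X" using W DX by blast
      then obtain b \<sigma> where b: "b \<in> X" "strict_mono \<sigma>" "(W \<circ> \<sigma>) \<longlonglongrightarrow> b"
        using seq_compactE[OF compact_imp_seq_compact[OF X]] by blast
      have bL: "b \<in> L" unfolding L_def
        by (rule lsup_I[of \<sigma> "W \<circ> \<sigma>"]) (use seq_suble[OF b(2)] W b in auto)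
      have xb: "dist x b \<ge> \<delta>1"
        using LIMSEQ_le_const[OF tendsto_dist[OF tendsto_const b(3)], of \<delta>1] W(2) by auto
      have LWs: "L \<subseteq> Ws X f \<epsilon> x"
      proof
        fix y assume y: "y \<in> L"
        obtain t cc where tc: "\<And>j. t j \<ge> j" "\<And>j. cc j \<in> D (t j)" "cc \<longlonglongrightarrow> y"
          using lsup_E[of y D] y unfolding L_def by blast
        have yX: "y \<in> X" using y lsup_subset[of X D, OF compact_imp_closed[OF X] DX] unfolding L_def by blast
        have ccX: "\<And>j. cc j \<in> X" using tc DX by blast
        have "dist ((f ^^ i) x) ((f ^^ i) y) \<le> e" for i
        proof -
          have lim: "(\<lambda>j. (f ^^ i) (cc j)) \<longlonglongrightarrow> (f ^^ i) y"
            by (rule continuous_on_tendsto_compose[OF hom_props(5)[OF hom] tc(3) yX]) (use ccX in auto)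
          have "\<exists>N. \<forall>j\<ge>N. dist ((f ^^ i) x) ((f ^^ i) (cc j)) \<le> e"
          proof (intro exI allI impI)
            fix j assume j: "j \<ge> i"
            have "n (t j + K0) \<ge> t j + K0" using seq_suble[OF n_mono] by blast
            then have "i \<le> n (t j + K0)" using j tc(1)[of j] by linarith
            moreover have "cc j \<in> SS (t j + K0)" using tc(2)[of j] CCS unfolding D_def by blast
            ultimately show "dist ((f ^^ i) x) ((f ^^ i) (cc j)) \<le> e" unfolding SS_def by blast
          qed
          then show ?thesis using LIMSEQ_le_const2[OF tendsto_dist[OF tendsto_const lim]] by blast
        qed
        then show "y \<in> Ws X f \<epsilon> x" unfolding Ws_def using yX e(3) by (auto intro: order_trans)
      qed
      have LCW: "L \<subseteq> CWs X f \<epsilon> x" unfolding CWs_def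
        by (rule connected_component_maximal[OF xL Lc LWs])
      have "bounded (CWs X f \<epsilon> x)"
      proof (rule bounded_subset[OF compact_imp_bounded[OF X]])
        show "CWs X f \<epsilon> x \<subseteq> X" unfolding CWs_def Ws_def using connected_component_subset by blast
      qed
      then have "dist x b \<le> diameter (CWs X f \<epsilon> x)"
        using diameter_bounded_bound LCW xL bL by blast
      then show ?thesis using xb by simp
    qed
  qed
qed

end
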